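(* Let $l_n,R_n>0$ ($n\in\mathbb N$) satisfy $l_n,R_n\to\infty$, $l_n^2/n\to0$, $n/R_n\to0$, $e^{-\pi l_n/2}R_n\to0$, and for real $t\neq\pm n$ let $W_n(t)=\lim_{\varepsilon\downarrow0}W_n(t+i\varepsilon)$, where $W_n(z)=\exp\!\big(-l_n\pi-il_n\log\frac{z-n}{z+n}\big)$, $z\in\mathbb C_+$. Then $$\sup_n\Big|\int_{1<|t|<n}W_n(t)\,\frac{dt}{t}\Big|<\infty.$$
   Context: $\mathbb C_+=\{\operatorname{Im}z>0\}$; $\log$ denotes the branch with imaginary part in $(0,\pi)$ on $\mathbb C_+$. Explicitly, the boundary values are $W_n(t)=e^{-il_n\log|\frac{t-n}{t+n}|}$ for $|t|<n$ and $W_n(t)=e^{-l_n\pi-il_n\log|\frac{t-n}{t+n}|}$ for $|t|>n$. *)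

theory Defs
  imports "HOL-Analysis.Analysis"
begin

text \<open>Isabelle's principal logarithm Ln has imaginary part in (0,pi) on the upper
  half plane, and (z-n)/(z+n) lies in the upper half plane for Im z > 0,
  so Ln agrees with the branch used in the paper.\<close>
definition W_upper :: "real \<Rightarrow> nat \<Rightarrow> complex \<Rightarrow> complex" where
  "W_upper l n z = exp (- complex_of_real (l * pi)
      - \<i> * complex_of_real l * Ln ((z - of_nat n) / (z + of_nat n)))"

definition W_boundary :: "real \<Rightarrow> nat \<Rightarrow> real \<Rightarrow> complex" where
  "W_boundary l n t = Lim (at_right 0) (\<lambda>\<epsilon>::real. W_upper l n (complex_of_real t + \<i> * complex_of_real \<epsilon>))"

end

theory Submission
  imports Defs
begin

definition hh :: "real \<Rightarrow> real \<Rightarrow> real" where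
  "hh m t = ln (m + t) - ln (m - t)"

lemma int_helper:
  fixes f :: "real \<Rightarrow> 'b::euclidean_space"
  assumes "a \<le> b" "continuous_on {a..<b} f" "\<And>x. x \<in> {a..<b} \<Longrightarrow> norm (f x) \<le> B"
  shows "f integrable_on {a..b}"
proof -
  have nb: "negligible {b}" by (rule negligible_sing)
  have S: "{a..<b} \<in> sets lebesgue" by simp
  have "f \<in> borel_measurable (lebesgue_on {a..<b})"
    by (rule continuous_imp_measurable_on_sets_lebesgue[OF assms(2) S])
  moreover have "(\<lambda>_. B) integrable_on {a..<b}"
  proof (rule integrable_spike_set[OF integrable_const_ivl[of B a b]])
    show "negligible {x \<in> {a..b} - {a..<b}. B \<noteq> 0}" by (rule negligible_subset[OF nb]) auto
    show "negligible {x \<in> {a..<b} - {a..b}. B \<noteq> 0}" by (rule negligible_subset[OF nb]) auto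
  qed
  ultimately have "f integrable_on {a..<b}"
    by (intro measurable_bounded_by_integrable_imp_integrable[OF _ _ assms(3) S])
  then show ?thesis
  proof (rule integrable_spike_set)
    show "negligible {x \<in> {a..<b} - {a..b}. f x \<noteq> 0}" by (rule negligible_subset[OF nb]) auto
    show "negligible {x \<in> {a..b} - {a..<b}. f x \<noteq> 0}" by (rule negligible_subset[OF nb]) auto
  qed
qed

lemma hh_bound:
  assumes "0 < m" "0 \<le> t" "t \<le> m/2"
  shows "0 \<le> hh m t" "hh m t \<le> 3 * t / m"
proof -
  have "ln (m-t) \<le> ln (m+t)" using assms by simp
  then show "0 \<le> hh m t" unfolding hh_def by simp
  have 1: "ln ((m+t)/m) \<le> (m+t)/m - 1" using assms by (intro ln_le_minus_one) auto
  have 2: "ln (m/(m-t)) \<le> m/(m-t) - 1" using assms by (intro ln_le_minus_one) auto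
  have e1: "ln ((m+t)/m) = ln (m+t) - ln m" using assms by (simp add: ln_div)
  have e2: "ln (m/(m-t)) = ln m - ln (m-t)" using assms by (simp add: ln_div)
  have 3: "m/(m-t) - 1 \<le> 2*t/m"
  proof -
    have "t*(t*2) \<le> m*t" using mult_right_mono[of "t*2" m t] assms by simp
    then show ?thesis using assms by (simp add: field_simps)
  qed
  have 4: "(m+t)/m - 1 = t/m" using assms by (simp add: field_simps)
  show "hh m t \<le> 3 * t / m" unfolding hh_def using 1 2 3 4 e1 e2 by simp
qed

lemma dF_gen:
  fixes h p :: "real \<Rightarrow> real"
  assumes dh: "(h has_real_derivative D) (at t)" and dp: "(p has_real_derivative P) (at t)" and L: "L \<noteq> 0"
  shows "((\<lambda>t. - cos (L * h t) / L * p t) has_real_derivative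
          (- (- sin (L * h t) * (L * D)) / L * p t + (- cos (L * h t) / L) * P)) (at t)"
  by (rule derivative_eq_intros dh dp refl | use L in simp)+

lemma real_bound:
  fixes L m :: real
  assumes L2: "2 \<le> L" and Lm: "L \<le> m"
  shows "\<bar>integral {1..m} (\<lambda>t. sin (L * hh m t) / t)\<bar> \<le> 5"
proof -
  define q where "q = (\<lambda>t. sin (L * hh m t) / t)"
  define a where "a = m / L"
  define b where "b = m / 2"
  have m0: "0 < m" "0 < L" using assms by linarith+
  have a1: "1 \<le> a" using assms m0 by (simp add: a_def field_simps)
  have ab: "a \<le> b"
  proof -
    have "m * 2 \<le> m * L" using mult_left_mono[OF L2, of m] m0 by simp
    then show ?thesis using m0 by (simp add: a_def b_def field_simps)
  qed
  have bm: "b < m" using m0 by (simp add: b_def)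
  have cont: "continuous_on {1..<m} q"
    unfolding q_def hh_def by (intro continuous_intros) auto
  have qint: "q integrable_on {1..m}"
  proof (rule int_helper[where B=1])
    show "1 \<le> m" using a1 ab bm by linarith
    show "continuous_on {1..<m} q" by (rule cont)
    fix x assume x: "x \<in> {1..<m}"
    have "\<bar>sin (L * hh m x)\<bar> / x \<le> 1 / x" using x by (intro divide_right_mono) auto
    also have "\<dots> \<le> 1" using x by auto
    finally show "norm (q x) \<le> 1" using x by (simp add: q_def abs_divide)
  qed
  have split: "integral {1..m} q = integral {1..a} q + integral {a..b} q + integral {b..m} q"
  proof -
    have "integral {1..m} q = integral {1..a} q + integral {a..m} q"
      using Henstock_Kurzweil_Integration.integral_combine[where a=1 and c=a and b=m and f=q] qint a1 ab bm by simp
    moreover have "integral {a..m} q = integral {a..b} q + integral {b..m} q"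
      using Henstock_Kurzweil_Integration.integral_combine[where a=a and c=b and b=m and f=q] integrable_on_subinterval[OF qint, of a m] a1 ab bm by simp
    ultimately show ?thesis by simp
  qed
  have i1: "\<bar>integral {1..a} q\<bar> \<le> 3"
  proof -
    have hint: "(q has_integral integral {1..a} q) {1..a}"
      using integrable_on_subinterval[OF qint, of 1 a] a1 ab bm by (simp add: integrable_integral)
    have bnd: "norm (q x) \<le> 3*L/m" if x: "x \<in> {1..a} - {}" for x
    proof -
      from x have x0: "0 < x" "x \<le> m/2" using ab by (auto simp: b_def)
      have h: "0 \<le> hh m x" "hh m x \<le> 3 * x / m" using hh_bound[of m x] x0 m0 by auto
      have "\<bar>sin (L * hh m x)\<bar> \<le> L * (3 * x / m)"
        using abs_sin_x_le_abs_x[of "L * hh m x"] h m0 mult_left_mono[OF h(2), of L]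
        by (simp add: abs_mult)
      then have "\<bar>sin (L * hh m x)\<bar> / x \<le> L * (3 * x / m) / x" using x0 by (intro divide_right_mono) auto
      also have "\<dots> = 3*L/m" using x0 by (simp add: field_simps)
      finally show "norm (q x) \<le> 3*L/m" using x0 by (simp add: q_def abs_divide)
    qed
    have "norm (integral {1..a} q) \<le> 3*L/m * (a - 1)"
      using has_integral_bound_real[OF _ finite.emptyI hint bnd] a1 m0 by simp
    also have "\<dots> \<le> 3*L/m * a" using m0 by (intro mult_left_mono) auto
    also have "\<dots> = 3" using m0 by (simp add: a_def)
    finally show ?thesis by simp
  qed
  have i3: "\<bar>integral {b..m} q\<bar> \<le> 1"
  proof -
    have hint: "(q has_integral integral {b..m} q) {b..m}"
      using integrable_on_subinterval[OF qint, of b m] a1 ab bm by (simp add: integrable_integral)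
    have bnd: "norm (q x) \<le> 2/m" if x: "x \<in> {b..m} - {}" for x
    proof -
      from x have x0: "0 < x" "m/2 \<le> x" using m0 by (auto simp: b_def)
      have "\<bar>sin (L * hh m x)\<bar> / x \<le> 1 / x" using x0 by (intro divide_right_mono) auto
      also have "\<dots> \<le> 2/m" using x0 m0 by (simp add: field_simps)
      finally show "norm (q x) \<le> 2/m" using x0 by (simp add: q_def abs_divide)
    qed
    have "norm (integral {b..m} q) \<le> 2/m * (m - b)"
      using has_integral_bound_real[OF _ finite.emptyI hint bnd] bm m0 by simp
    also have "\<dots> = 1" using m0 by (simp add: b_def)
    finally show ?thesis by simp
  qed
  have i2: "\<bar>integral {a..b} q\<bar> \<le> 1"
  proof -
    define \<phi> where "\<phi> = (\<lambda>t::real. m/(2*t) - t/(2*m))"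
    define \<phi>' where "\<phi>' = (\<lambda>t::real. - m/(2*t^2) - 1/(2*m))"
    define F where "F = (\<lambda>t. - cos (L * hh m t) / L * \<phi> t)"
    define r where "r = (\<lambda>t. cos (L * hh m t) * \<phi>' t / L)"
    have a0: "0 < a" using a1 by linarith
    have key: "(1/(m+t) + 1/(m-t)) * \<phi> t = 1/t" if "0 < t" "t < m" for t
    proof -
      have "t*t < m*m" using mult_strict_mono[of t m t m] that by auto
      then show ?thesis using that unfolding \<phi>_def by (simp add: field_simps)
    qed
    have dphi: "(\<phi> has_real_derivative \<phi>' t) (at t)" if "0 < t" for t
      unfolding \<phi>_def \<phi>'_def using that m0
      by (auto intro!: derivative_eq_intros simp: field_simps power2_eq_square)
    have dhh: "(hh m has_real_derivative (1/(m+t) + 1/(m-t))) (at t)" if "0 < t" "t < m" for t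
      unfolding hh_def using that m0
      by (auto intro!: derivative_eq_intros simp: field_simps)
    have dF: "(F has_real_derivative (q t - r t)) (at t)" if "0 < t" "t < m" for t
    proof -
      have "(F has_real_derivative
          (- (- sin (L * hh m t) * (L * (1/(m+t) + 1/(m-t)))) / L * \<phi> t + (- cos (L * hh m t) / L) * \<phi>' t)) (at t)"
        unfolding F_def
        by (rule dF_gen[OF dhh[OF that] dphi[OF that(1)]]) (use m0 in simp)
      moreover have "(- (- sin (L * hh m t) * (L * (1/(m+t) + 1/(m-t)))) / L * \<phi> t + (- cos (L * hh m t) / L) * \<phi>' t)
          = q t - r t"
      proof -
        have "(- (- sin (L * hh m t) * (L * (1/(m+t) + 1/(m-t)))) / L * \<phi> t)
            = sin (L * hh m t) * ((1/(m+t) + 1/(m-t)) * \<phi> t)" using m0 by (simp add: field_simps)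
        also have "\<dots> = q t" using key[OF that] by (simp add: q_def)
        finally show ?thesis by (simp add: r_def)
      qed
      ultimately show ?thesis by simp
    qed
    have ftc: "((\<lambda>t. q t - r t) has_integral (F b - F a)) {a..b}"
    proof (rule fundamental_theorem_of_calculus)
      show "a \<le> b" by (rule ab)
      fix x assume x: "x \<in> {a..b}"
      have "(F has_real_derivative (q x - r x)) (at x)" using x a0 bm by (intro dF) auto
      then show "(F has_vector_derivative (q x - r x)) (at x within {a..b})"
        unfolding has_real_derivative_iff_has_vector_derivative[symmetric] by (rule has_field_derivative_at_within)
    qed
    have rcont: "continuous_on {a..b} r"
      unfolding r_def \<phi>'_def hh_def using a0 bm m0 by (intro continuous_intros) auto
    have rint: "r integrable_on {a..b}" by (rule integrable_continuous_interval[OF rcont])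
    have eqI: "integral {a..b} q = (F b - F a) + integral {a..b} r"
    proof -
      have "((\<lambda>t. (q t - r t) + r t) has_integral ((F b - F a) + integral {a..b} r)) {a..b}"
        by (intro has_integral_add ftc integrable_integral rint)
      moreover have "(\<lambda>t. (q t - r t) + r t) = q" by auto
      ultimately have "(q has_integral ((F b - F a) + integral {a..b} r)) {a..b}" by simp
      then show ?thesis by (rule integral_unique)
    qed
    have phi_nonneg: "0 \<le> \<phi> t" if "0 < t" "t \<le> m" for t
    proof -
      have "t*t \<le> m*m" using mult_mono[of t m t m] that by auto
      then show ?thesis using that m0 unfolding \<phi>_def by (simp add: field_simps)
    qed
    have Fb: "\<bar>F t\<bar> \<le> \<phi> t / L" if "0 < t" "t \<le> m" for t
    proof -
      have "\<bar>F t\<bar> = \<bar>cos (L * hh m t)\<bar> * \<phi> t / L"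
        using phi_nonneg[OF that] m0 by (simp add: F_def abs_mult abs_divide)
      also have "\<dots> \<le> 1 * \<phi> t / L"
        using phi_nonneg[OF that] m0 by (intro divide_right_mono mult_right_mono) auto
      finally show ?thesis by simp
    qed
    have ftc2: "((\<lambda>t. - \<phi>' t / L) has_integral ((- \<phi> b / L) - (- \<phi> a / L))) {a..b}"
    proof (rule fundamental_theorem_of_calculus)
      show "a \<le> b" by (rule ab)
      fix x assume x: "x \<in> {a..b}"
      have "((\<lambda>t. - \<phi> t / L) has_real_derivative (- \<phi>' x / L)) (at x)"
        using x a0 by (intro DERIV_cdivide DERIV_minus dphi) auto
      then show "((\<lambda>t. - \<phi> t / L) has_vector_derivative (- \<phi>' x / L)) (at x within {a..b})"
        unfolding has_real_derivative_iff_has_vector_derivative[symmetric] by (rule has_field_derivative_at_within)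
    qed
    have rb: "norm (integral {a..b} r) \<le> integral {a..b} (\<lambda>t. - \<phi>' t / L)"
    proof (rule integral_norm_bound_integral[OF rint])
      show "(\<lambda>t. - \<phi>' t / L) integrable_on {a..b}" using ftc2 by blast
      fix t assume t: "t \<in> {a..b}"
      have neg: "\<phi>' t \<le> 0"
      proof -
        have "0 \<le> m / (2 * t^2)" "0 \<le> 1 / (2*m)" using m0 by auto
        then show ?thesis unfolding \<phi>'_def by linarith
      qed
      have "norm (r t) = \<bar>cos (L * hh m t)\<bar> * (- \<phi>' t) / L"
        using neg m0 by (simp add: r_def abs_mult abs_divide)
      also have "\<dots> \<le> 1 * (- \<phi>' t) / L"
        using neg m0 by (intro divide_right_mono mult_right_mono) auto
      finally show "norm (r t) \<le> - \<phi>' t / L" by simp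
    qed
    have rb2: "integral {a..b} (\<lambda>t. - \<phi>' t / L) = (\<phi> a - \<phi> b) / L"
    proof -
      have e: "integral {a..b} (\<lambda>t. - \<phi>' t / L) = (- \<phi> b / L) - (- \<phi> a / L)"
        by (rule integral_unique[OF ftc2])
      have "(- \<phi> b / L) - (- \<phi> a / L) = (\<phi> a - \<phi> b) / L" by (simp add: diff_divide_distrib)
      then show ?thesis by (rule trans[OF e])
    qed
    have "\<bar>integral {a..b} q\<bar> \<le> \<phi> b / L + \<phi> a / L + (\<phi> a - \<phi> b) / L"
    proof -
      have fa: "\<bar>F a\<bar> \<le> \<phi> a / L" by (rule Fb) (use a0 ab bm in auto)
      have fb: "\<bar>F b\<bar> \<le> \<phi> b / L" by (rule Fb) (use a0 ab bm in auto)
      have rn: "\<bar>integral {a..b} r\<bar> \<le> (\<phi> a - \<phi> b) / L" using rb[unfolded rb2] by (simp only: real_norm_def)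
      show ?thesis unfolding eqI using fa fb rn by (simp only: abs_le_iff) linarith
    qed
    also have "\<dots> = 2 * \<phi> a / L" using m0 by (simp add: field_simps)
    also have "\<dots> \<le> 2 * (m / (2*a)) / L"
      using m0 a0 by (intro divide_right_mono mult_left_mono) (auto simp: \<phi>_def)
    also have "\<dots> = 1" using m0 a0 by (simp add: a_def)
    finally show ?thesis .
  qed
  have "\<bar>integral {1..m} q\<bar> \<le> 5" unfolding split using i1 i2 i3 by (simp only: abs_le_iff) linarith
  then show ?thesis by (simp add: q_def)
qed

lemma Im_w_pos:
  fixes t e :: real and n :: nat
  assumes "0 < n" "0 < e"
  shows "0 < Im ((complex_of_real t + \<i> * complex_of_real e - of_nat n) / (complex_of_real t + \<i> * complex_of_real e + of_nat n))"
proof -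
  have num: "Im (complex_of_real t + \<i> * complex_of_real e - of_nat n) * Re (complex_of_real t + \<i> * complex_of_real e + of_nat n)
     - Re (complex_of_real t + \<i> * complex_of_real e - of_nat n) * Im (complex_of_real t + \<i> * complex_of_real e + of_nat n)
     = 2 * real n * e" by (simp add: algebra_simps)
  have den: "0 < (Re (complex_of_real t + \<i> * complex_of_real e + of_nat n))\<^sup>2 + (Im (complex_of_real t + \<i> * complex_of_real e + of_nat n))\<^sup>2"
    using assms by (simp add: add_nonneg_pos)
  show ?thesis unfolding Im_divide num using assms den by (simp add: divide_pos_pos)
qed

lemma W_formula:
  fixes t :: real and n :: nat
  assumes n: "0 < n" and t: "\<bar>t\<bar> < real n"
  shows "W_boundary l n t = exp (\<i> * complex_of_real (l * hh (real n) t))"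
proof -
  define w where "w = (\<lambda>e::real. (complex_of_real t + \<i> * complex_of_real e - of_nat n) / (complex_of_real t + \<i> * complex_of_real e + of_nat n))"
  define G where "G = (\<lambda>e. exp (- complex_of_real (l * pi) - \<i> * complex_of_real l * (Ln (- w e) + \<i> * pi)))"
  have ev: "eventually (\<lambda>e. G e = W_upper l n (complex_of_real t + \<i> * complex_of_real e)) (at_right 0)"
    using eventually_at_right_less[of "0::real"]
  proof (rule eventually_mono)
    fix e :: real assume e: "0 < e"
    have im: "0 < Im (w e)" unfolding w_def by (rule Im_w_pos[OF n e])
    then have w0: "w e \<noteq> 0" by auto
    have "Ln (- w e) = Ln (w e) - \<i> * pi" using Ln_minus[OF w0] im by auto
    then have "Ln (w e) = Ln (- w e) + \<i> * pi" by simp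
    then show "G e = W_upper l n (complex_of_real t + \<i> * complex_of_real e)"
      unfolding G_def W_upper_def w_def by simp
  qed
  have tn: "0 < real n + t" "0 < real n - t" using t by auto
  have w0: "- w 0 = complex_of_real ((real n - t) / (real n + t))"
  proof -
    have "- w 0 = (complex_of_nat n - complex_of_real t) / (complex_of_nat n + complex_of_real t)"
      unfolding w_def by (simp add: minus_divide_left add.commute)
    also have "\<dots> = complex_of_real ((real n - t) / (real n + t))" by simp
    finally show ?thesis .
  qed
  have pos: "0 < (real n - t) / (real n + t)" using tn by simp
  have den0: "complex_of_real t + \<i> * complex_of_real 0 + of_nat n \<noteq> 0"
  proof -
    have "complex_of_real t + \<i> * complex_of_real 0 + of_nat n = complex_of_real (t + real n)" by simp
    moreover have "complex_of_real (t + real n) \<noteq> 0" using tn by (simp only: of_real_eq_0_iff)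
    ultimately show ?thesis by simp
  qed
  have cont: "isCont G 0"
  proof -
    have dn: "complex_of_nat n + complex_of_real t \<noteq> 0"
    proof
      assume h: "complex_of_nat n + complex_of_real t = 0"
      have e: "complex_of_real (real n + t) = complex_of_nat n + complex_of_real t" by simp
      have "complex_of_real (real n + t) \<noteq> 0" using tn by (simp only: of_real_eq_0_iff)
      then show False unfolding e h by simp
    qed
    have c1: "isCont w 0" unfolding w_def using den0 dn by (intro continuous_intros) (auto simp: add.commute)
    have c2: "- w 0 \<notin> \<real>\<^sub>\<le>\<^sub>0" unfolding w0 complex_nonpos_Reals_iff using pos by simp
    show ?thesis unfolding G_def
      by (intro continuous_intros isCont_Ln' c1 c2)
  qed
  have G0: "G 0 = exp (\<i> * complex_of_real (l * hh (real n) t))"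
  proof -
    have "Ln (- w 0) = complex_of_real (ln ((real n - t) / (real n + t)))"
      unfolding w0 using pos by (rule Ln_of_real)
    also have "ln ((real n - t) / (real n + t)) = - hh (real n) t"
      using tn by (simp add: ln_div hh_def)
    finally have L: "Ln (- w 0) = - complex_of_real (hh (real n) t)" by simp
    show ?thesis unfolding G_def L
      by (rule arg_cong[where f=exp]) (simp add: algebra_simps)
  qed
  have "(G \<longlongrightarrow> G 0) (at 0)" using cont by (simp add: isCont_def)
  then have "(G \<longlongrightarrow> G 0) (at_right 0)" by (rule tendsto_mono[OF at_le, rotated]) simp
  then have "((\<lambda>e. W_upper l n (complex_of_real t + \<i> * complex_of_real e)) \<longlongrightarrow> G 0) (at_right 0)"
    by (rule Lim_transform_eventually) (rule ev)
  then show ?thesis unfolding W_boundary_def G0[symmetric]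
    by (intro tendsto_Lim) simp_all
qed


lemma sym_identity:
  fixes L m t :: real
  assumes "t \<noteq> 0"
  shows "exp (\<i> * complex_of_real (L * hh m t)) / complex_of_real t
       + exp (\<i> * complex_of_real (L * hh m (-t))) / complex_of_real (-t)
       = 2 * \<i> * complex_of_real (sin (L * hh m t) / t)"
proof -
  have hm: "hh m (-t) = - hh m t" by (simp add: hh_def)
  define x where "x = L * hh m t"
  have e: "exp (\<i> * complex_of_real x) - exp (\<i> * complex_of_real (-x)) = 2 * \<i> * complex_of_real (sin x)"
  proof -
    have c1: "exp (\<i> * complex_of_real x) = cis x" by (simp add: cis_conv_exp)
    have c2: "exp (\<i> * complex_of_real (-x)) = cis (-x)" by (simp add: cis_conv_exp)
    show ?thesis unfolding c1 c2 by (simp add: complex_eq_iff)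
  qed
  have "exp (\<i> * complex_of_real (L * hh m t)) / complex_of_real t
       + exp (\<i> * complex_of_real (L * hh m (-t))) / complex_of_real (-t)
       = (exp (\<i> * complex_of_real x) - exp (\<i> * complex_of_real (-x))) / complex_of_real t"
    unfolding hm x_def by (simp add: diff_divide_distrib)
  also have "\<dots> = 2 * \<i> * complex_of_real (sin x / t)" unfolding e by simp
  finally show ?thesis by (simp add: x_def)
qed

lemma main_n:
  fixes L :: real and n :: nat
  assumes L2: "2 \<le> L" and Ln: "L \<le> real n"
  shows "cmod (integral {t::real. 1 < \<bar>t\<bar> \<and> \<bar>t\<bar> < real n}
                  (\<lambda>t. W_boundary L n t / complex_of_real t)) \<le> 10"
proof -
  define m where "m = real n"
  have m2: "2 \<le> m" using assms by (simp add: m_def)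
  have n0: "0 < n" using m2 by (simp add: m_def)
  define g where "g = (\<lambda>t. exp (\<i> * complex_of_real (L * hh m t)) / complex_of_real t)"
  define q where "q = (\<lambda>t. sin (L * hh m t) / t)"
  define E where "E = {t::real. 1 < \<bar>t\<bar> \<and> \<bar>t\<bar> < real n}"
  have s1: "integral E (\<lambda>t. W_boundary L n t / complex_of_real t) = integral E g"
  proof (rule integral_cong)
    fix t assume "t \<in> E"
    then have "\<bar>t\<bar> < real n" by (simp add: E_def)
    then show "W_boundary L n t / complex_of_real t = g t"
      by (simp add: W_formula[OF n0] g_def m_def)
  qed
  have s2: "integral E g = integral ({-m..-1} \<union> {1..m}) g"
  proof (rule integral_spike_set)
    have sub: "E \<subseteq> {-m..-1} \<union> {1..m}"
    proof
      fix x assume "x \<in> E"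
      then have x: "1 < \<bar>x\<bar>" "\<bar>x\<bar> < m" by (auto simp: E_def m_def)
      show "x \<in> {-m..-1} \<union> {1..m}"
      proof (cases "0 \<le> x")
        case True then show ?thesis using x by auto
      next
        case False then show ?thesis using x by auto
      qed
    qed
    have "{x \<in> E - ({-m..-1} \<union> {1..m}). g x \<noteq> 0} = {}" using sub by blast
    then show "negligible {x \<in> E - ({-m..-1} \<union> {1..m}). g x \<noteq> 0}" by (simp only:) simp
    have "{x \<in> ({-m..-1} \<union> {1..m}) - E. g x \<noteq> 0} \<subseteq> {-m,-1,1,m}"
      by (auto simp: E_def m_def abs_if split: if_splits)
    then show "negligible {x \<in> ({-m..-1} \<union> {1..m}) - E. g x \<noteq> 0}"
      by (rule negligible_subset[OF negligible_finite, rotated]) simp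
  qed
  have gint: "g integrable_on {1..m}"
  proof (rule int_helper[where B=1])
    show "1 \<le> m" using m2 by simp
    show "continuous_on {1..<m} g" unfolding g_def hh_def by (intro continuous_intros) auto
    fix x assume x: "x \<in> {1..<m}"
    then show "norm (g x) \<le> 1" by (simp add: g_def norm_divide)
  qed
  have gmint: "(\<lambda>x. g (-x)) integrable_on {1..m}"
  proof (rule int_helper[where B=1])
    show "1 \<le> m" using m2 by simp
    show "continuous_on {1..<m} (\<lambda>x. g (-x))" unfolding g_def hh_def by (intro continuous_intros) auto
    fix x assume x: "x \<in> {1..<m}"
    then show "norm (g (-x)) \<le> 1" by (simp add: g_def norm_divide)
  qed
  have qint: "q integrable_on {1..m}"
  proof (rule int_helper[where B=1])
    show "1 \<le> m" using m2 by simp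
    show "continuous_on {1..<m} q" unfolding q_def hh_def by (intro continuous_intros) auto
    fix x assume x: "x \<in> {1..<m}"
    have "\<bar>sin (L * hh m x)\<bar> / x \<le> 1 / x" using x by (intro divide_right_mono) auto
    also have "\<dots> \<le> 1" using x by auto
    finally show "norm (q x) \<le> 1" using x by (simp add: q_def abs_divide)
  qed
  have g1int: "g integrable_on {-m..-1}"
    using Henstock_Kurzweil_Integration.integrable_reflect_real[where f="\<lambda>x. g (-x)" and a=1 and b=m] gmint by simp
  have s3: "integral ({-m..-1} \<union> {1..m}) g = integral {-m..-1} g + integral {1..m} g"
  proof (rule integral_Un[OF g1int gint])
    have "{-m..-1} \<inter> {1..m} = {}" by auto
    then show "negligible ({-m..-1} \<inter> {1..m})" by (simp only:) simp
  qed
  have s4: "integral {-m..-1} g = integral {1..m} (\<lambda>x. g (-x))"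
    using Henstock_Kurzweil_Integration.integral_reflect_real[where f="\<lambda>x. g (-x)" and a=1 and b=m] by simp
  have s5: "integral {1..m} (\<lambda>x. g (-x)) + integral {1..m} g = integral {1..m} (\<lambda>x. g x + g (-x))"
    using integral_add[OF gint gmint] by simp
  have s6: "integral {1..m} (\<lambda>x. g x + g (-x)) = integral {1..m} (\<lambda>x. 2 * \<i> * complex_of_real (q x))"
  proof (rule integral_cong)
    fix x assume "x \<in> {1..m}"
    then have "x \<noteq> 0" by auto
    then show "g x + g (-x) = 2 * \<i> * complex_of_real (q x)"
      unfolding g_def q_def by (rule sym_identity)
  qed
  have s7: "integral {1..m} (\<lambda>x. 2 * \<i> * complex_of_real (q x)) = 2 * \<i> * complex_of_real (integral {1..m} q)"
    by (rule integral_unique, rule has_integral_mult_right, rule has_integral_of_real, rule integrable_integral, rule qint)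
  have tot: "integral E (\<lambda>t. W_boundary L n t / complex_of_real t) = 2 * \<i> * complex_of_real (integral {1..m} q)"
    using s1 s2 s3 s4 s5 s6 s7 by simp
  have rb: "\<bar>integral {1..m} q\<bar> \<le> 5" unfolding q_def using real_bound[OF L2] Ln by (simp add: m_def)
  have "cmod (integral E (\<lambda>t. W_boundary L n t / complex_of_real t)) = 2 * \<bar>integral {1..m} q\<bar>"
    unfolding tot by (simp add: norm_mult)
  also have "\<dots> \<le> 10" using rb by simp
  finally show ?thesis by (simp add: E_def)
qed

theorem lemma5:
  fixes l R :: "nat \<Rightarrow> real"
  assumes l_pos: "\<And>n. l n > 0" and R_pos: "\<And>n. R n > 0"
    and l_inf: "filterlim l at_top sequentially"
    and R_inf: "filterlim R at_top sequentially"
    and l2n: "(\<lambda>n. (l n)^2 / real n) \<longlonglongrightarrow> 0"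
    and nR: "(\<lambda>n. real n / R n) \<longlonglongrightarrow> 0"
    and expR: "(\<lambda>n. exp (- pi * l n / 2) * R n) \<longlonglongrightarrow> 0"
  shows "\<exists>C. \<forall>n. cmod (integral {t::real. 1 < \<bar>t\<bar> \<and> \<bar>t\<bar> < real n}
                  (\<lambda>t. W_boundary (l n) n t / complex_of_real t)) \<le> C"
proof -
  define I where "I = (\<lambda>n. cmod (integral {t::real. 1 < \<bar>t\<bar> \<and> \<bar>t\<bar> < real n}
                  (\<lambda>t. W_boundary (l n) n t / complex_of_real t)))"
  have e1: "eventually (\<lambda>n. 2 \<le> l n) sequentially"
    using l_inf by (simp add: filterlim_at_top)
  have e2: "eventually (\<lambda>n. (l n)^2 / real n < 1) sequentially"
    using order_tendstoD(2)[OF l2n, of 1] by simp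
  have e3: "eventually (\<lambda>n. 1 \<le> n) sequentially" by (rule eventually_ge_at_top)
  have "eventually (\<lambda>n. I n \<le> 10) sequentially"
    using e1 e2 e3
  proof eventually_elim
    case (elim n)
    have np: "0 < real n" using elim(3) by simp
    have "(l n)^2 < real n" using elim(2) np by (simp add: field_simps)
    moreover have "l n \<le> (l n)^2"
    proof -
      have "1 * l n \<le> l n * l n" using elim(1) by (intro mult_right_mono) auto
      then show ?thesis by (simp add: power2_eq_square)
    qed
    ultimately have "l n \<le> real n" by linarith
    then show ?case unfolding I_def by (rule main_n[OF elim(1)])
  qed
  then obtain N where N: "\<And>n. n \<ge> N \<Longrightarrow> I n \<le> 10" by (auto simp: eventually_sequentially)
  define C where "C = max 10 (Max (I ` {..<N}))"
  have "I n \<le> C" for n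
  proof (cases "n < N")
    case True
    then have "I n \<le> Max (I ` {..<N})" by (intro Max_ge) auto
    then show ?thesis unfolding C_def by linarith
  next
    case False
    then show ?thesis using N[of n] unfolding C_def by linarith
  qed
  then show ?thesis unfolding I_def by blast
qed

end
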